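(* In any $\{K_3,K_4\}$-decomposition of $K_{18}$ with $\alpha=13$, every vertex $x$ of $K_{18}$ satisfies $\alpha_x\in\{1,4\}$.
   Context: A $\{K_3,K_4\}$-decomposition of $K_v$ is a collection of subgraphs, each isomorphic to $K_3$ or $K_4$ (triples and quadruples), such that every edge of $K_v$ lies in exactly one of them. $\alpha$ is the number of copies of $K_3$ in the decomposition, and for a vertex $x$, $\alpha_x$ is the number of copies of $K_3$ in the decomposition containing $x$. *)

theory Defs
  imports Main
begin

text \<open>A {K3,K4}-decomposition is a collection D of blocks (vertex subsets of size 3 or 4,
  i.e. copies of K3 or K4) such that every edge lies in exactly one block.\<close>

definition K34_decomposition :: "nat \<Rightarrow> nat set set \<Rightarrow> bool" where
  "K34_decomposition v D \<longleftrightarrow>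
     (\<forall>B\<in>D. B \<subseteq> {0..<v} \<and> (card B = 3 \<or> card B = 4)) \<and>
     (\<forall>x\<in>{0..<v}. \<forall>y\<in>{0..<v}. x \<noteq> y \<longrightarrow> (\<exists>!B. B \<in> D \<and> x \<in> B \<and> y \<in> B))"

definition alpha :: "nat set set \<Rightarrow> nat" where
  "alpha D = card {B\<in>D. card B = 3}"

definition alpha_at :: "nat set set \<Rightarrow> nat \<Rightarrow> nat" where
  "alpha_at D x = card {B\<in>D. card B = 3 \<and> x \<in> B}"

end

theory Submission
  imports Defs
begin

context
  fixes D :: "nat set set"
  assumes dec: "K34_decomposition 18 D"
begin

lemma blk: "B \<in> D \<Longrightarrow> B \<subseteq> {0..<18} \<and> (card B = 3 \<or> card B = 4)"
  using dec unfolding K34_decomposition_def by blast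

lemma blk_fin: "B \<in> D \<Longrightarrow> finite B"
  using blk finite_subset by blast

lemma finD: "finite D"
proof -
  have "D \<subseteq> Pow {0..<18}" using blk by blast
  then show ?thesis by (simp add: finite_subset)
qed

lemma uniq:
  assumes "B1 \<in> D" "B2 \<in> D" "a \<in> B1" "b \<in> B1" "a \<in> B2" "b \<in> B2" "a \<noteq> b"
  shows "B1 = B2"
proof -
  have "a \<in> {0..<18}" "b \<in> {0..<18}" using blk assms by blast+
  then have "\<exists>!B. B \<in> D \<and> a \<in> B \<and> b \<in> B"
    using dec assms(7) unfolding K34_decomposition_def by blast
  then show ?thesis using assms by blast
qed

lemma exist:
  assumes "a \<in> {0..<18}" "b \<in> {0..<18}" "a \<noteq> b"
  shows "\<exists>B\<in>D. a \<in> B \<and> b \<in> B"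
  using dec assms unfolding K34_decomposition_def by blast

definition Nb :: "nat \<Rightarrow> nat \<Rightarrow> nat set" where
  "Nb k a = {b. b \<noteq> a \<and> (\<exists>B\<in>D. card B = k \<and> a \<in> B \<and> b \<in> B)}"

definition tb :: "nat \<Rightarrow> nat \<Rightarrow> nat set set" where
  "tb k a = {B\<in>D. card B = k \<and> a \<in> B}"

lemma Nb_UN: "Nb k a = (\<Union>B\<in>tb k a. B - {a})"
  by (auto simp: Nb_def tb_def)

lemma card_Nb: "card (Nb k a) = (k - 1) * card (tb k a)"
proof -
  have fin: "finite (tb k a)" using finD by (simp add: tb_def)
  have "card (\<Union>B\<in>tb k a. B - {a}) = (\<Sum>B\<in>tb k a. card (B - {a}))"
  proof (rule card_UN_disjoint)
    show "finite (tb k a)" by (rule fin)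
    show "\<forall>i\<in>tb k a. finite (i - {a})" using blk_fin by (auto simp: tb_def)
    show "\<forall>i\<in>tb k a. \<forall>j\<in>tb k a. i \<noteq> j \<longrightarrow> (i - {a}) \<inter> (j - {a}) = {}"
      using uniq unfolding tb_def by blast
  qed
  also have "\<dots> = (\<Sum>B\<in>tb k a. k - 1)"
    by (rule sum.cong) (auto simp: tb_def blk_fin)
  finally show ?thesis using Nb_UN by simp
qed

lemma alpha_tb: "alpha_at D a = card (tb 3 a)"
  by (simp add: alpha_at_def tb_def)

lemma card_Nt: "card (Nb 3 a) = 2 * alpha_at D a"
  using card_Nb[of 3 a] alpha_tb by simp

lemma Nb_sub: "Nb k a \<subseteq> {0..<18}"
  using blk unfolding Nb_def by blast

lemma Nb_fin: "finite (Nb k a)"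
  using Nb_sub finite_subset by blast

lemma Nb_sym: "b \<in> Nb k a \<longleftrightarrow> a \<in> Nb k b"
  unfolding Nb_def by blast

lemma split17:
  assumes "a \<in> {0..<18}"
  shows "card (Nb 3 a) + card (Nb 4 a) = 17"
proof -
  have u: "Nb 3 a \<union> Nb 4 a = {0..<18} - {a}"
  proof
    show "Nb 3 a \<union> Nb 4 a \<subseteq> {0..<18} - {a}" using Nb_sub by (auto simp: Nb_def)
    show "{0..<18} - {a} \<subseteq> Nb 3 a \<union> Nb 4 a"
    proof
      fix b assume b: "b \<in> {0..<18} - {a}"
      then obtain B where "B \<in> D" "a \<in> B" "b \<in> B" using exist assms by blast
      then show "b \<in> Nb 3 a \<union> Nb 4 a" using blk[of B] b unfolding Nb_def by auto
    qed
  qed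
  have d: "Nb 3 a \<inter> Nb 4 a = {}"
  proof (rule ccontr)
    assume "Nb 3 a \<inter> Nb 4 a \<noteq> {}"
    then obtain b B1 B2 where "b \<noteq> a" "B1 \<in> D" "card B1 = 3" "a \<in> B1" "b \<in> B1"
      "B2 \<in> D" "card B2 = 4" "a \<in> B2" "b \<in> B2" unfolding Nb_def by blast
    then show False using uniq[of B1 B2 a b] by auto
  qed
  have "card (Nb 3 a \<union> Nb 4 a) = card (Nb 3 a) + card (Nb 4 a)"
    by (rule card_Un_disjoint) (use Nb_fin d in auto)
  then show ?thesis using u assms by simp
qed

lemma alpha_vals:
  assumes "a \<in> {0..<18}"
  shows "alpha_at D a = 1 \<or> alpha_at D a = 4 \<or> alpha_at D a = 7"
proof -
  have "2 * alpha_at D a + 3 * card (tb 4 a) = 17"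
    using split17[OF assms] card_Nt card_Nb[of 4 a] by simp
  then show ?thesis by presburger
qed

lemma sum_alpha: assumes al: "alpha D = 13" shows "(\<Sum>a\<in>{0..<18}. alpha_at D a) = 39"
proof -
  have "(\<Sum>a\<in>{0..<18::nat}. card {B\<in>{B\<in>D. card B = 3}. a \<in> B}) = 3 * card {B\<in>D. card B = 3}"
  proof (rule sum_multicount)
    show "finite {0..<18::nat}" by simp
    show "finite {B\<in>D. card B = 3}" using finD by simp
    show "\<forall>j\<in>{B \<in> D. card B = 3}. card {i \<in> {0..<18}. i \<in> j} = 3"
    proof
      fix j assume "j \<in> {B \<in> D. card B = 3}"
      then have "{i \<in> {0..<18}. i \<in> j} = j" "card j = 3" using blk by blast+
      then show "card {i \<in> {0..<18}. i \<in> j} = 3" by simp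
    qed
  qed
  moreover have "\<And>a. card {B\<in>{B\<in>D. card B = 3}. a \<in> B} = alpha_at D a"
    unfolding alpha_at_def by (rule arg_cong[where f=card]) blast
  ultimately show ?thesis using al unfolding alpha_def by simp
qed

lemma light:
  assumes "alpha_at D l = 1" "x \<in> Nb 3 l" "z \<in> Nb 3 l"
  shows "\<exists>B\<in>D. card B = 3 \<and> l \<in> B \<and> x \<in> B \<and> z \<in> B"
proof -
  obtain B where B: "tb 3 l = {B}" using assms(1) alpha_tb card_1_singleton_iff by (metis One_nat_def)
  then have "Nb 3 l = B - {l}" using Nb_UN[of 3 l] by simp
  moreover have "B \<in> D" "card B = 3" "l \<in> B" using B unfolding tb_def by blast+
  ultimately show ?thesis using assms by blast
qed

lemma not7:
  assumes al: "alpha D = 13" and xV: "x \<in> {0..<18}" and x7: "alpha_at D x = 7"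
  shows False
proof -
  define V where "V = {0..<18::nat}"
  define H where "H = {v\<in>V. alpha_at D v \<noteq> 1}"
  define L where "L = {v\<in>V. alpha_at D v = 1}"
  define h where "h = card H"
  have finV: "finite V" by (simp add: V_def)
  have finH: "finite H" and finL: "finite L" by (auto simp: H_def L_def V_def)
  have HL: "H \<union> L = V" "H \<inter> L = {}" by (auto simp: H_def L_def)
  have xH: "x \<in> H" using xV x7 by (simp add: H_def V_def)
  have cardHL: "h + card L = 18"
    using card_Un_disjoint[OF finH finL] HL by (simp add: h_def V_def)
  have sumV: "(\<Sum>v\<in>V. alpha_at D v) = (\<Sum>v\<in>H. alpha_at D v) + (\<Sum>v\<in>L. alpha_at D v)"
    using sum.union_disjoint[OF finH finL] HL by simp
  have sumL: "(\<Sum>v\<in>L. alpha_at D v) = card L" by (simp add: L_def)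
  have sumH: "(\<Sum>v\<in>H. alpha_at D v) + card L = 39"
    using sumV sumL sum_alpha[OF al] by (simp add: V_def)
  have H4: "\<And>v. v \<in> H \<Longrightarrow> alpha_at D v \<ge> 4"
    using alpha_vals unfolding H_def V_def by fastforce
  have "(\<Sum>v\<in>H. alpha_at D v) = alpha_at D x + (\<Sum>v\<in>H-{x}. alpha_at D v)"
    using sum.remove[OF finH xH] by simp
  moreover have "(\<Sum>v\<in>H-{x}. alpha_at D v) \<ge> (\<Sum>v\<in>H-{x}. 4)"
    by (rule sum_mono) (use H4 in auto)
  moreover have "card (H - {x}) = h - 1" using xH finH by (simp add: h_def)
  ultimately have sumHge: "(\<Sum>v\<in>H. alpha_at D v) \<ge> 7 + 4 * (h - 1)" using x7 by simp
  have h1: "h \<ge> 1" using xH finH h_def card_0_eq by fastforce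
  have h6: "h \<le> 6" using sumHge sumH cardHL h1 by linarith
  have NbV: "\<And>v. Nb 3 v \<subseteq> V" using Nb_sub V_def by simp
  have splitN: "\<And>v. card (Nb 3 v \<inter> H) + card (Nb 3 v \<inter> L) = 2 * alpha_at D v"
  proof -
    fix v
    have "Nb 3 v = (Nb 3 v \<inter> H) \<union> (Nb 3 v \<inter> L)" using NbV HL by blast
    then have "card (Nb 3 v) = card (Nb 3 v \<inter> H) + card (Nb 3 v \<inter> L)"
      using card_Un_disjoint[of "Nb 3 v \<inter> H" "Nb 3 v \<inter> L"] finH finL HL by auto
    then show "card (Nb 3 v \<inter> H) + card (Nb 3 v \<inter> L) = 2 * alpha_at D v" using card_Nt by simp
  qed
  have NH: "\<And>v. v \<in> H \<Longrightarrow> card (Nb 3 v \<inter> H) \<le> h - 1"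
  proof -
    fix v assume v: "v \<in> H"
    have "Nb 3 v \<inter> H \<subseteq> H - {v}" by (auto simp: Nb_def)
    then have "card (Nb 3 v \<inter> H) \<le> card (H - {v})" using finH by (simp add: card_mono)
    then show "card (Nb 3 v \<inter> H) \<le> h - 1" using v finH by (simp add: h_def)
  qed
  define E where "E = (\<Sum>v\<in>H. card (Nb 3 v \<inter> L))"
  have "(\<Sum>v\<in>H. card (Nb 3 v \<inter> H)) \<le> (\<Sum>v\<in>H. h - 1)"
    by (rule sum_mono) (use NH in auto)
  then have "(\<Sum>v\<in>H. card (Nb 3 v \<inter> H)) \<le> h * (h - 1)" by (simp add: h_def)
  moreover have "(\<Sum>v\<in>H. card (Nb 3 v \<inter> H)) + E = (\<Sum>v\<in>H. 2 * alpha_at D v)"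
    unfolding E_def sum.distrib[symmetric] using splitN by simp
  ultimately have E1: "E + h * (h - 1) \<ge> 2 * (\<Sum>v\<in>H. alpha_at D v)"
    by (simp add: sum_distrib_left)
  have swap: "E = (\<Sum>l\<in>L. card (Nb 3 l \<inter> H))"
  proof -
    have "(\<Sum>v\<in>H. card {l\<in>L. l \<in> Nb 3 v}) = (\<Sum>l\<in>L. card (Nb 3 l \<inter> H))"
    proof (rule sum_multicount_gen)
      show "finite H" "finite L" by (rule finH, rule finL)
      show "\<forall>j\<in>L. card {i \<in> H. j \<in> Nb 3 i} = card (Nb 3 j \<inter> H)"
      proof
        fix j show "card {i \<in> H. j \<in> Nb 3 i} = card (Nb 3 j \<inter> H)"
          by (rule arg_cong[where f=card]) (auto simp: Nb_sym)
      qed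
    qed
    moreover have "\<And>v. {l\<in>L. l \<in> Nb 3 v} = Nb 3 v \<inter> L" by blast
    ultimately show ?thesis unfolding E_def by simp
  qed
  define A where "A = {l\<in>L. card (Nb 3 l \<inter> H) \<le> 1}"
  have finA: "finite A" using finL by (simp add: A_def)
  have AL: "A \<subseteq> L" by (auto simp: A_def)
  have le2: "\<And>l. l \<in> L \<Longrightarrow> card (Nb 3 l \<inter> H) \<le> 2"
  proof -
    fix l assume "l \<in> L"
    then have "card (Nb 3 l) = 2" using card_Nt by (simp add: L_def)
    then show "card (Nb 3 l \<inter> H) \<le> 2" using card_mono[OF Nb_fin[of 3 l], of "Nb 3 l \<inter> H"] by auto
  qed
  have "(\<Sum>l\<in>L. card (Nb 3 l \<inter> H)) = (\<Sum>l\<in>A. card (Nb 3 l \<inter> H)) + (\<Sum>l\<in>L-A. card (Nb 3 l \<inter> H))"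
    using sum.subset_diff[OF AL finL] by (simp add: add.commute)
  moreover have "(\<Sum>l\<in>A. card (Nb 3 l \<inter> H)) \<le> (\<Sum>l\<in>A. 1)"
    by (rule sum_mono) (auto simp: A_def)
  moreover have "(\<Sum>l\<in>L-A. card (Nb 3 l \<inter> H)) \<le> (\<Sum>l\<in>L-A. 2)"
    by (rule sum_mono) (use le2 in auto)
  moreover have "card (L - A) + card A = card L" using AL finL
    by (metis card_Diff_subset card_mono finite_subset le_add_diff_inverse2)
  ultimately have E2: "E + card A \<le> 2 * card L" using swap by simp
  define c where "c = card (Nb 3 x \<inter> H)"
  have c1: "c \<le> h - 1" using NH[OF xH] c_def by simp
  have cx: "c + card (Nb 3 x \<inter> L) = 14" using splitN[of x] x7 c_def by simp
  define Bs where "Bs = {l\<in>Nb 3 x \<inter> L. \<exists>z\<in>H. z \<noteq> x \<and> z \<in> Nb 3 l}"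
  have sub1: "Nb 3 x \<inter> L \<subseteq> A \<union> Bs"
  proof
    fix l assume l: "l \<in> Nb 3 x \<inter> L"
    show "l \<in> A \<union> Bs"
    proof (cases "l \<in> Bs")
      case False
      then have "Nb 3 l \<inter> H \<subseteq> {x}" using l by (auto simp: Bs_def)
      then have "card (Nb 3 l \<inter> H) \<le> 1" by (metis One_nat_def card.empty card.insert card_mono
          empty_iff finite.emptyI finite.insertI le_SucI order_refl subset_singleton_iff)
      then show ?thesis using l by (simp add: A_def)
    qed simp
  qed
  define S where "S = (\<lambda>z. {l\<in>L. l \<in> Nb 3 x \<and> z \<in> Nb 3 l})"
  have sub2: "Bs \<subseteq> (\<Union>z\<in>Nb 3 x \<inter> H. S z)"
  proof
    fix l assume "l \<in> Bs"
    then obtain z where l: "l \<in> Nb 3 x" "l \<in> L" "z \<in> H" "z \<noteq> x" "z \<in> Nb 3 l"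
      by (auto simp: Bs_def)
    have "x \<in> Nb 3 l" using l Nb_sym by blast
    then obtain B where "B \<in> D" "card B = 3" "l \<in> B" "x \<in> B" "z \<in> B"
      using light[of l x z] l by (auto simp: L_def)
    then have "z \<in> Nb 3 x" using l unfolding Nb_def by blast
    then show "l \<in> (\<Union>z\<in>Nb 3 x \<inter> H. S z)" using l by (auto simp: S_def)
  qed
  have S1: "\<And>z. z \<in> Nb 3 x \<Longrightarrow> card (S z) \<le> 1"
  proof -
    fix z assume zx: "z \<in> Nb 3 x"
    have finS: "finite (S z)" using finL by (simp add: S_def)
    have "\<forall>a\<in>S z. \<forall>b\<in>S z. a = b"
    proof (intro ballI, rule ccontr)
      fix a b assume a: "a \<in> S z" and b: "b \<in> S z" and ab: "a \<noteq> b"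
      have "x \<in> Nb 3 a" "x \<in> Nb 3 b" using a b Nb_sym by (auto simp: S_def)
      then obtain B1 B2 where B1: "B1 \<in> D" "card B1 = 3" "a \<in> B1" "x \<in> B1" "z \<in> B1"
        and B2: "B2 \<in> D" "card B2 = 3" "b \<in> B2" "x \<in> B2" "z \<in> B2"
        using light[of a x z] light[of b x z] a b by (auto simp: S_def L_def)
      have "z \<noteq> x" using zx by (simp add: Nb_def)
      then have "B1 = B2" using uniq[of B1 B2 x z] B1 B2 by simp
      have "a \<noteq> x" "b \<noteq> x" "a \<noteq> z" "b \<noteq> z" using a b by (auto simp: S_def Nb_def)
      then have "card {a, b, x, z} = 4" using ab \<open>z \<noteq> x\<close> by simp
      moreover have "{a, b, x, z} \<subseteq> B1" using B1 B2 \<open>B1 = B2\<close> by simp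
      ultimately have "4 \<le> card B1" using card_mono[OF blk_fin[OF B1(1)]] by metis
      then show False using B1 by simp
    qed
    then show "card (S z) \<le> 1" using finS by (simp add: card_le_Suc0_iff_eq)
  qed
  have "card Bs \<le> card (\<Union>z\<in>Nb 3 x \<inter> H. S z)"
  proof (rule card_mono)
    have "(\<Union>z\<in>Nb 3 x \<inter> H. S z) \<subseteq> L" by (auto simp: S_def)
    then show "finite (\<Union>z\<in>Nb 3 x \<inter> H. S z)" using finL finite_subset by blast
  qed (rule sub2)
  also have "\<dots> \<le> (\<Sum>z\<in>Nb 3 x \<inter> H. card (S z))"
    by (rule card_UN_le) (use finH in simp)
  also have "\<dots> \<le> (\<Sum>z\<in>Nb 3 x \<inter> H. 1)"
    by (rule sum_mono) (use S1 in auto)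
  finally have Bsc: "card Bs \<le> c" by (simp add: c_def)
  have finBs: "finite Bs" using finL by (simp add: Bs_def)
  have "card (Nb 3 x \<inter> L) \<le> card (A \<union> Bs)"
    by (rule card_mono) (use finA finBs sub1 in auto)
  also have "\<dots> \<le> card A + card Bs" by (rule card_Un_le)
  finally have Ac: "card (Nb 3 x \<inter> L) \<le> card A + c" using Bsc by simp
  have "h = 1 \<or> h = 2 \<or> h = 3 \<or> h = 4 \<or> h = 5 \<or> h = 6" using h1 h6 by auto
  then show False using E1 E2 Ac cx c1 sumH cardHL by auto
qed

end

theorem mainTheorem9:
  assumes "K34_decomposition 18 D"
    and "alpha D = 13"
    and "x \<in> {0..<18}"
  shows "alpha_at D x \<in> {1, 4}"
  using alpha_vals[OF assms(1,3)] not7[OF assms(1,2,3)] by auto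

end
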